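(* $\det(AA^\top)\ge\rho(A)^{2n}$.
   Context: $A=[a_1|\cdots|a_m]\in\mathbb{R}^{n\times m}$ has columns of unit Euclidean norm and $\{A\lambda:\lambda\ge0\}=\mathbb{R}^n$. For a matrix $M$, $\|M\|_{1,2}:=\max_{\|w\|_1=1}\|Mw\|_2$. Define $\rho(A):=\min_{\Delta A\in\mathbb{R}^{n\times m}}\{\|\Delta A\|_{1,2}:\ \exists\,v\neq0 \text{ with } (A+\Delta A)^\top v\le0\}$. *)

theory Defs
  imports "HOL-Analysis.Analysis"
begin

text \<open>Matrices \<open>real^'m^'n\<close> are n x m (n rows indexed by 'n, m columns indexed by 'm).\<close>

definition norm12 :: "real^'m^'n \<Rightarrow> real" where
  "norm12 M = Sup {norm (M *v w) | w. (\<Sum>j\<in>UNIV. \<bar>w $ j\<bar>) = 1}"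

definition rho :: "real^'m^'n \<Rightarrow> real" where
  "rho A = Inf {norm12 dA | dA. \<exists>v::real^'n. v \<noteq> 0 \<and>
                  (\<forall>j. (transpose (A + dA) *v v) $ j \<le> 0)}"

end

theory Submission imports Defs begin
lemma norm12_bdd:
  fixes M :: "real^'m^'n"
  shows "bdd_above {norm (M *v w) | w. (\<Sum>j\<in>UNIV. \<bar>w $ j\<bar>) = 1}"
proof (rule bdd_aboveI, safe)
  fix w :: "real^'m" assume h: "(\<Sum>j\<in>UNIV. \<bar>w $ j\<bar>) = 1"
  have "norm (M *v w) = norm (\<Sum>j\<in>UNIV. w$j *s column j M)" by (simp add: matrix_mult_sum)
  also have "\<dots> \<le> (\<Sum>j\<in>UNIV. norm (w$j *s column j M))" by (rule norm_sum)
  also have "\<dots> = (\<Sum>j\<in>UNIV. \<bar>w$j\<bar> * norm (column j M))"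
    by (simp add: scalar_mult_eq_scaleR)
  also have "\<dots> \<le> (\<Sum>j\<in>UNIV. norm (column j M))"
  proof (rule sum_mono)
    fix j
    have "\<bar>w$j\<bar> \<le> 1" using h member_le_sum[of j UNIV "\<lambda>j. \<bar>w$j\<bar>"] by auto
    then show "\<bar>w$j\<bar> * norm (column j M) \<le> norm (column j M)"
      by (simp add: mult_left_le_one_le)
  qed
  finally show "norm (M *v w) \<le> (\<Sum>j\<in>UNIV. norm (column j M))" .
qed

lemma norm12_set_ne: "{norm ((M::real^'m^'n) *v w) | w. (\<Sum>j\<in>UNIV. \<bar>w $ j\<bar>) = 1} \<noteq> {}"
proof -
  obtain j :: 'm where True by blast
  have "(\<Sum>k\<in>UNIV. \<bar>axis j (1::real) $ k\<bar>) = 1"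
    by (simp add: axis_def if_distrib cong: if_cong)
  then show ?thesis by blast
qed

lemma norm12_nonneg: "0 \<le> norm12 (M::real^'m^'n)"
proof -
  obtain j :: 'm where True by blast
  have "(\<Sum>k\<in>UNIV. \<bar>axis j (1::real) $ k\<bar>) = 1"
    by (simp add: axis_def if_distrib cong: if_cong)
  then have "norm (M *v axis j 1) \<le> norm12 M"
    unfolding norm12_def by (intro cSup_upper norm12_bdd) blast
  then show ?thesis by (meson norm_ge_zero order_trans)
qed

lemma norm12_le:
  fixes M :: "real^'m^'n"
  assumes "\<And>w. (\<Sum>j\<in>UNIV. \<bar>w $ j\<bar>) = 1 \<Longrightarrow> norm (M *v w) \<le> c"
  shows "norm12 M \<le> c"
  unfolding norm12_def using norm12_set_ne[of M] assms by (intro cSup_least) auto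

lemma rho_set_ne: "{norm12 dA | dA. \<exists>v::real^'n. v \<noteq> 0 \<and>
                  (\<forall>j. (transpose ((A::real^'m^'n) + dA) *v v) $ j \<le> 0)} \<noteq> {}"
proof -
  obtain i :: 'n where True by blast
  have "axis i (1::real) \<noteq> 0" by (simp add: axis_eq_0_iff)
  moreover have "\<forall>j. (transpose (A + (-A)) *v axis i 1) $ j \<le> 0" by simp
  ultimately show ?thesis by blast
qed

lemma rho_nonneg: "0 \<le> rho (A::real^'m^'n)"
  unfolding rho_def using rho_set_ne[of A] norm12_nonneg by (intro cInf_greatest) auto

lemma rho_le:
  fixes A :: "real^'m^'n" and v :: "real^'n"
  shows "rho A * norm v \<le> norm (transpose A *v v)"
proof (cases "v = 0")
  case True then show ?thesis by simp
next
  case False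
  define u where "u = v /\<^sub>R norm v"
  have nu: "norm u = 1" using False by (simp add: u_def)
  have uu: "(\<Sum>k\<in>UNIV. u$k * u$k) = 1"
    using nu by (simp add: norm_eq_sqrt_inner inner_vec_def)
  define g where "g = transpose A *v u"
  define dA :: "real^'m^'n" where "dA = (\<chi> k j. - (u$k * g$j))"
  have zero: "transpose (A + dA) *v u = 0"
  proof -
    have "(transpose (A + dA) *v u) $ j = 0" for j
    proof -
      have "(transpose (A + dA) *v u) $ j = (\<Sum>k\<in>UNIV. A$k$j * u$k) - g$j * (\<Sum>k\<in>UNIV. u$k * u$k)"
        by (simp add: matrix_vector_mult_def transpose_def dA_def algebra_simps sum.distrib sum_distrib_left sum_subtractf)
      also have "(\<Sum>k\<in>UNIV. A$k$j * u$k) = g$j"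
        by (simp add: g_def matrix_vector_mult_def transpose_def)
      finally show ?thesis using uu by simp
    qed
    then show ?thesis by (simp add: vec_eq_iff)
  qed
  have "transpose (A + dA) *v v = norm v *\<^sub>R (transpose (A + dA) *v u)"
    using False by (simp add: u_def matrix_vector_mult_scaleR)
  then have z2: "transpose (A + dA) *v v = 0" using zero by simp
  have "rho A \<le> norm12 dA"
    unfolding rho_def
  proof (rule cInf_lower)
    show "norm12 dA \<in> {norm12 dA | dA. \<exists>v::real^'n. v \<noteq> 0 \<and> (\<forall>j. (transpose (A + dA) *v v) $ j \<le> 0)}"
    proof -
      have "\<forall>j. (transpose (A + dA) *v v) $ j \<le> 0" using z2 by simp
      then show ?thesis using False by blast
    qed
    show "bdd_below {norm12 dA | dA. \<exists>v::real^'n. v \<noteq> 0 \<and> (\<forall>j. (transpose (A + dA) *v v) $ j \<le> 0)}"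
      using norm12_nonneg by (intro bdd_belowI[of _ 0]) auto
  qed
  also have "norm12 dA \<le> norm g"
  proof (rule norm12_le)
    fix w :: "real^'m" assume h: "(\<Sum>j\<in>UNIV. \<bar>w $ j\<bar>) = 1"
    have "dA *v w = - (g \<bullet> w) *\<^sub>R u"
      by (simp add: vec_eq_iff dA_def matrix_vector_mult_def inner_vec_def sum_distrib_left algebra_simps sum_negf)
    then have "norm (dA *v w) = \<bar>g \<bullet> w\<bar>" using nu by simp
    also have "\<dots> \<le> (\<Sum>j\<in>UNIV. \<bar>g$j\<bar> * \<bar>w$j\<bar>)"
      unfolding inner_vec_def by (rule order_trans[OF sum_abs]) (simp add: abs_mult)
    also have "\<dots> \<le> (\<Sum>j\<in>UNIV. norm g * \<bar>w$j\<bar>)"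
      by (intro sum_mono mult_right_mono component_le_norm_cart) auto
    also have "\<dots> = norm g" using h by (simp add: sum_distrib_left[symmetric])
    finally show "norm (dA *v w) \<le> norm g" .
  qed
  finally have "rho A \<le> norm g" .
  then have "rho A * norm v \<le> norm g * norm v" by (simp add: mult_right_mono)
  also have "norm g * norm v = norm (transpose A *v v)"
    using False by (simp add: g_def u_def matrix_vector_mult_scaleR)
  finally show ?thesis .
qed

lemma row_eq_nth: "row k M = M $ k"
  by (simp add: row_def vec_eq_iff)

lemma span_coord_zero:
  fixes R :: "(real^'n) set"
  assumes "w \<in> span R" and "\<And>x. x \<in> R \<Longrightarrow> x $ k = 0"
  shows "w $ k = 0"
proof -
  have "subspace {x::real^'n. x $ k = 0}" by (simp add: subspace_def)
  then show ?thesis using span_induct[OF assms(1), of "\<lambda>x. x $ k = 0"] assms(2) by auto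
qed

lemma gs:
  fixes A :: "real^'m^'n" and S :: "'n set"
  shows "\<exists>P::real^'n^'n. det P = 1 \<and> (\<forall>i. i \<notin> S \<longrightarrow> P $ i = axis i 1)
     \<and> (\<forall>i\<in>S. P$i$i = 1 \<and> (\<forall>k. k \<notin> S \<longrightarrow> P$i$k = 0))
     \<and> (\<forall>i\<in>S. \<forall>j\<in>S. i \<noteq> j \<longrightarrow> orthogonal (transpose A *v (P$i)) (transpose A *v (P$j)))"
proof -
  have "finite S" by simp
  then show ?thesis
  proof (induct S rule: finite_induct)
    case empty
    have "(mat 1::real^'n^'n) $ i = axis i 1" for i by (simp add: mat_def axis_def vec_eq_iff)
    then show ?case by (intro exI[of _ "mat 1"]) (simp add: det_I)
  next
    case (insert i S)
    from insert(3) obtain P :: "real^'n^'n" where P1: "det P = 1" and P2: "\<forall>i. i \<notin> S \<longrightarrow> P $ i = axis i 1"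
      and P3: "\<forall>i\<in>S. P$i$i = 1 \<and> (\<forall>k. k \<notin> S \<longrightarrow> P$i$k = 0)"
      and P4: "\<forall>i\<in>S. \<forall>j\<in>S. i \<noteq> j \<longrightarrow> orthogonal (transpose A *v (P$i)) (transpose A *v (P$j))"
      by (elim exE conjE) (rule that)
    define f where "f = (\<lambda>x::real^'n. transpose A *v x)"
    have lf: "linear f" unfolding f_def by (rule matrix_vector_mul_linear)
    define R where "R = (\<lambda>j. P $ j) ` S"
    obtain y z where y: "y \<in> span (f ` R)" and z: "\<And>w. w \<in> span (f ` R) \<Longrightarrow> orthogonal z w"
      and yz: "f (axis i 1) = y + z"
      using orthogonal_subspace_decomp_exists[of "f ` R" "f (axis i 1)"] by blast
    from y obtain w where w: "w \<in> span R" and yw: "y = f w"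
      using span_linear_image[OF lf, of R] by auto
    have wz: "w $ k = 0" if "k \<notin> S" for k
      using w by (rule span_coord_zero) (use P3 that in \<open>auto simp: R_def\<close>)
    define P' where "P' = (\<chi> k. if k = i then axis i 1 - w else P $ k)"
    have P'n: "P' $ k = (if k = i then axis i 1 - w else P $ k)" for k
      by (simp add: P'_def)
    have "det P' = det P"
    proof -
      have "-w \<in> vec.span {row j P |j. j \<noteq> i}"
        unfolding span_vec_eq
      proof (rule span_neg)
        have "R \<subseteq> {row j P |j. j \<noteq> i}" using insert(2) by (auto simp: R_def row_eq_nth)
        then show "w \<in> span {row j P |j. j \<noteq> i}" using w span_mono by blast
      qed
      from det_row_span[OF this] have "det (\<chi> k. if k = i then row i P + - w else row k P) = det P" .
      moreover have "(\<chi> k. if k = i then row i P + - w else row k P) = P'"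
        using P2 insert(2) by (simp add: P'_def row_eq_nth vec_eq_iff)
      ultimately show ?thesis by simp
    qed
    have fi: "f (P' $ i) = z"
      using yz yw lf by (simp add: P'n linear_diff)
    show ?case
    proof (intro exI[of _ P'] conjI ballI allI impI)
      show "det P' = 1" using \<open>det P' = det P\<close> P1 by simp
    next
      fix k assume "k \<notin> insert i S"
      then show "P' $ k = axis k 1" using P2 by (simp add: P'n)
    next
      fix k assume k: "k \<in> insert i S"
      show "P' $ k $ k = 1"
        using k P3 wz insert(2) by (auto simp: P'n axis_def)
    next
      fix k l assume k: "k \<in> insert i S" and l: "l \<notin> insert i S"
      show "P' $ k $ l = 0"
        using k l P3 wz insert(2) by (auto simp: P'n axis_def)
    next
      fix k l assume k: "k \<in> insert i S" and l: "l \<in> insert i S" and kl: "k \<noteq> l"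
      have orth: "orthogonal z (f (P $ j))" if "j \<in> S" for j
        using z that by (auto simp: R_def intro: span_base)
      show "orthogonal (transpose A *v P' $ k) (transpose A *v P' $ l)"
      proof (cases "k = i")
        case True
        then have "l \<in> S" using l kl by auto
        then show ?thesis using True fi orth insert(2) by (auto simp: f_def P'n)
      next
        case False
        note kF = False
        show ?thesis
        proof (cases "l = i")
          case True
          then have "orthogonal z (f (P $ k))" using k kF orth by auto
          then show ?thesis using True fi kF by (auto simp: f_def P'n orthogonal_commute)
        next
          case False
          then show ?thesis using kF k l kl P4 by (auto simp: P'n)
        qed
      qed
    qed
  qed
qed

lemma mmult_row: "((P::real^'n^'n) ** (A::real^'m^'n)) $ i = transpose A *v (P $ i)"
  by (simp add: vec_eq_iff matrix_matrix_mult_def matrix_vector_mult_def transpose_def mult.commute)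

theorem proposition11:
  fixes A :: "real^'m^'n"
  assumes unit_cols: "\<forall>j. norm (column j A) = 1"
    and spans: "{A *v l | l. \<forall>j. 0 \<le> l $ j} = UNIV"
  shows "det (A ** transpose A) \<ge> rho A ^ (2 * CARD('n))"
proof -
  obtain P :: "real^'n^'n" where P1: "det P = 1"
      and P3: "\<forall>i. P$i$i = 1"
      and P4: "\<forall>i j. i \<noteq> j \<longrightarrow> orthogonal (transpose A *v (P$i)) (transpose A *v (P$j))"
    using gs[where A=A and S=UNIV] by auto
  define B where "B = P ** A"
  have "B ** transpose B = P ** (A ** transpose A) ** transpose P"
    by (simp add: B_def matrix_transpose_mul matrix_mul_assoc)
  then have "det (B ** transpose B) = det (A ** transpose A)"
    using P1 by (simp add: det_mul det_transpose)
  moreover have "det (B ** transpose B) = (\<Prod>i\<in>UNIV. (B ** transpose B) $ i $ i)"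
  proof (rule det_diagonal)
    fix i j :: 'n assume "i \<noteq> j"
    then show "(B ** transpose B) $ i $ j = 0"
      using P4 unfolding matrix_mult_transpose_dot_row
      by (simp add: B_def row_eq_nth mmult_row orthogonal_def del: transpose_matrix_vector)
  qed
  moreover have "(B ** transpose B) $ i $ i = norm (transpose A *v (P $ i)) ^ 2" for i
    unfolding matrix_mult_transpose_dot_row
    by (simp add: B_def row_eq_nth mmult_row power2_norm_eq_inner del: transpose_matrix_vector)
  moreover have "rho A ^ 2 \<le> norm (transpose A *v (P $ i)) ^ 2" for i
  proof -
    have "1 \<le> norm (P $ i)" using component_le_norm_cart[of "P $ i" i] P3 by simp
    then have "rho A \<le> rho A * norm (P $ i)" using rho_nonneg[of A]
      by (simp add: mult_le_cancel_left1)
    also have "\<dots> \<le> norm (transpose A *v (P $ i))" by (rule rho_le)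
    finally show ?thesis using rho_nonneg[of A] by (simp add: power_mono)
  qed
  ultimately have "det (A ** transpose A) \<ge> (\<Prod>i\<in>(UNIV::'n set). rho A ^ 2)"
    by (metis (no_types, lifting) prod_mono zero_le_power2)
  then show ?thesis by (simp add: power_mult)
qed
end
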